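(* Let $0<q<p\le1$ and $n\in\mathbb{N}$. For $x\in[0,1]$ and $i=0,1,2$ let $e_i(t)=t^i$. Then for all $x\in[0,1]$, $$\widetilde{M}_{n,k}^{(p,q)}(e_0;x)=1,$$ $$\frac{x}{q^2}\left(1-\frac{q+1}{[n]_{p,q}}\right)\le \widetilde{M}_{n,k}^{(p,q)}(e_1;x)\le \frac{x}{q}+\frac{p^n-q^nx}{q^2[n]_{p,q}},$$ $$\widetilde{M}_{n,k}^{(p,q)}(e_2;x)\le \frac{x^2}{q^2}+\frac{(p+q)^2}{q^5}\frac{(p^n-q^nx)}{[n]_{p,q}}x+\frac{p(p+q)}{q^6}\frac{(p^n-q^nx)(p^{n-1}-q^{n-1}x)}{[n]_{p,q}[n-1]_{p,q}}.$$
   Context: For $0<q<p\le1$: $[n]_{p,q}=\frac{p^n-q^n}{p-q}$; $[n]_{p,q}!=[1]_{p,q}\cdots[n]_{p,q}$, $[0]_{p,q}!=1$; $\begin{bmatrix}n\\k\end{bmatrix}_{p,q}=\frac{[n]_{p,q}!}{[k]_{p,q}![n-k]_{p,q}!}$; $(x+y)_{p,q}^n=\prod_{j=0}^{n-1}(p^jx+q^jy)$. The $(p,q)$-integral is $\int_0^a f(t)\,d_{p,q}t=(p-q)a\sum_{j=0}^\infty \frac{q^j}{p^{j+1}}f\!\left(\frac{q^j}{p^{j+1}}a\right)$. Define $m_{n,k}^{(p,q)}(x)=\frac{1}{p^{kn+n(n+1)/2}}\begin{bmatrix}n+k\\k\end{bmatrix}_{p,q}x^k(1-x)^{n+1}_{p,q}$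 and $b_{n,k}^{(p,q)}(qt)=\frac{1}{p^{k(n-1)+n(n-1)/2}}\begin{bmatrix}n+k+1\\k\end{bmatrix}_{p,q}(qt)^k(1-qt)^n_{p,q}$. The $(p,q)$-Meyer-König-Zeller Durrmeyer operator applied to $f$ defined on $[0,1]$ is $$\widetilde{M}_{n,k}^{(p,q)}(f;x)=\frac{[n+1]_{p,q}}{p^n}\sum_{k=0}^\infty m_{n,k}^{(p,q)}(x)\,(pq)^{-k}\int_0^1 b_{n,k}^{(p,q)}(qt)f(t)\,d_{p,q}t,\quad 0\le x<1,$$ and $\widetilde{M}_{n,k}^{(p,q)}(f;1)=f(1)$ (the subscript $k$ in the notation is just part of the name; $k$ is summed over). *)

theory Defs
  imports Complex_Main
begin

definition pq_int :: "real \<Rightarrow> real \<Rightarrow> nat \<Rightarrow> real" where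
  "pq_int p q n = (p ^ n - q ^ n) / (p - q)"

definition pq_fact :: "real \<Rightarrow> real \<Rightarrow> nat \<Rightarrow> real" where
  "pq_fact p q n = (\<Prod>j=1..n. pq_int p q j)"

definition pq_binom :: "real \<Rightarrow> real \<Rightarrow> nat \<Rightarrow> nat \<Rightarrow> real" where
  "pq_binom p q n k = pq_fact p q n / (pq_fact p q k * pq_fact p q (n - k))"

definition pq_pow :: "real \<Rightarrow> real \<Rightarrow> real \<Rightarrow> real \<Rightarrow> nat \<Rightarrow> real" where
  "pq_pow p q x y n = (\<Prod>j<n. p ^ j * x + q ^ j * y)"

definition pq_integral :: "real \<Rightarrow> real \<Rightarrow> (real \<Rightarrow> real) \<Rightarrow> real \<Rightarrow> real" where
  "pq_integral p q f a =
     (p - q) * a * (\<Sum>j. q ^ j / p ^ (j + 1) * f (q ^ j / p ^ (j + 1) * a))"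

definition mkz_m :: "real \<Rightarrow> real \<Rightarrow> nat \<Rightarrow> nat \<Rightarrow> real \<Rightarrow> real" where
  "mkz_m p q n k x =
     1 / p ^ (k * n + n * (n + 1) div 2) * pq_binom p q (n + k) k * x ^ k
       * pq_pow p q 1 (- x) (n + 1)"

text \<open>b_{n,k}^{(p,q)} evaluated at the argument u (the paper uses u = q t).\<close>
definition mkz_b :: "real \<Rightarrow> real \<Rightarrow> nat \<Rightarrow> nat \<Rightarrow> real \<Rightarrow> real" where
  "mkz_b p q n k u =
     1 / p ^ (k * (n - 1) + n * (n - 1) div 2) * pq_binom p q (n + k + 1) k * u ^ k
       * pq_pow p q 1 (- u) n"

definition mkz_durrmeyer :: "real \<Rightarrow> real \<Rightarrow> nat \<Rightarrow> (real \<Rightarrow> real) \<Rightarrow> real \<Rightarrow> real" where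
  "mkz_durrmeyer p q n f x =
     (if x = 1 then f 1
      else pq_int p q (n + 1) / p ^ n *
        (\<Sum>k. mkz_m p q n k x * (p * q) powi (- int k) *
              pq_integral p q (\<lambda>t. mkz_b p q n k (q * t) * f t) 1))"

end

theory Submission
  imports Defs
begin
definition qi :: "real \<Rightarrow> nat \<Rightarrow> real" where
  "qi r n = (1 - r ^ n) / (1 - r)"

definition LL :: "real \<Rightarrow> nat \<Rightarrow> nat \<Rightarrow> real" where
  "LL r a m = (\<Prod>i<m. 1 - r ^ (a + i))"

definition qb :: "real \<Rightarrow> nat \<Rightarrow> nat \<Rightarrow> real" where
  "qb r m k = LL r 1 (m + k) / (LL r 1 k * LL r 1 m)"

definition Px :: "real \<Rightarrow> real \<Rightarrow> nat \<Rightarrow> real" where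
  "Px r x m = (\<Prod>i<m. 1 - r ^ i * x)"

definition mm :: "real \<Rightarrow> nat \<Rightarrow> nat \<Rightarrow> real \<Rightarrow> real" where
  "mm r n k x = qb r n k * x ^ k * Px r x (Suc n)"

lemma LL_0[simp]: "LL r a 0 = 1" by (simp add: LL_def)

lemma LL_Suc: "LL r a (Suc m) = LL r a m * (1 - r ^ (a + m))"
  by (simp add: LL_def)

lemma LL_Suc': "LL r a (Suc m) = (1 - r ^ a) * LL r (Suc a) m"
  unfolding LL_def prod.lessThan_Suc_shift by simp

lemma LL_add: "LL r a (m + l) = LL r a m * LL r (a + m) l"
  by (induction l) (simp_all add: LL_Suc add.assoc)

lemma r_pow_lt1: "0 < r \<Longrightarrow> r < 1 \<Longrightarrow> n \<ge> 1 \<Longrightarrow> r ^ n < (1::real)"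
  by (simp add: power_less_one_iff)

lemma one_minus_pos: "0 < r \<Longrightarrow> r < 1 \<Longrightarrow> n \<ge> 1 \<Longrightarrow> 1 - r ^ n > (0::real)"
  using r_pow_lt1 by simp

lemma LL_pos: "0 < r \<Longrightarrow> r < 1 \<Longrightarrow> a \<ge> 1 \<Longrightarrow> LL r a m > 0"
  unfolding LL_def by (intro prod_pos) (auto simp: power_less_one_iff)

lemma qi_pos: "0 < r \<Longrightarrow> r < 1 \<Longrightarrow> n \<ge> 1 \<Longrightarrow> qi r n > 0"
  unfolding qi_def by (auto simp: power_less_one_iff)

lemma qi_0[simp]: "qi r 0 = 0" by (simp add: qi_def)

lemma qi_add: "r < 1 \<Longrightarrow> qi r (a + b) = qi r a + r ^ a * qi r b"
  unfolding qi_def by (simp add: field_simps power_add)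

lemma qi_nonneg: "0 < r \<Longrightarrow> r < 1 \<Longrightarrow> qi r n \<ge> 0"
  using qi_pos[of r n] by (cases n) auto

lemma qi_mono: "0 < r \<Longrightarrow> r < 1 \<Longrightarrow> qi r a \<le> qi r (a + b)"
  using qi_add[of r a b] qi_nonneg[of r b] by simp

lemma qi_ge: "0 < r \<Longrightarrow> r < 1 \<Longrightarrow> r ^ a * qi r b \<le> qi r (a + b)"
  using qi_add[of r a b] qi_nonneg[of r a] by simp

lemma qb_0[simp]: "0 < r \<Longrightarrow> r < 1 \<Longrightarrow> qb r m 0 = 1"
  using LL_pos[of r 1 m] by (simp add: qb_def)

lemma qb_0'[simp]: "0 < r \<Longrightarrow> r < 1 \<Longrightarrow> qb r 0 k = 1"
  using LL_pos[of r 1 k] by (simp add: qb_def)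

lemma qb_pos: "0 < r \<Longrightarrow> r < 1 \<Longrightarrow> qb r m k > 0"
  unfolding qb_def by (intro divide_pos_pos mult_pos_pos LL_pos) auto

lemma qb_pascal: assumes "0 < r" "r < 1"
  shows "qb r (Suc m) (Suc k) = r ^ Suc m * qb r (Suc m) k + qb r m (Suc k)"
proof -
  define A where "A = LL r 1 k"
  define B where "B = LL r 1 m"
  define D where "D = LL r 1 (Suc m + k)"
  define U where "U = 1 - r ^ Suc k"
  define V where "V = 1 - r ^ Suc m"
  have e: "r ^ (Suc (Suc (m + k))) = r ^ Suc k * r ^ Suc m"
    by (simp add: power_add[symmetric] add.commute)
  have a: "LL r 1 (Suc m + Suc k) = D * (V + (1 - V) * U)"
    by (simp add: LL_Suc D_def U_def V_def algebra_simps power_add)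
  have b: "LL r 1 (m + Suc k) = D" by (simp add: D_def)
  have c: "LL r 1 (Suc k) = A * U" by (simp add: LL_Suc A_def U_def)
  have d: "LL r 1 (Suc m) = B * V" by (simp add: LL_Suc B_def V_def)
  have p1: "A > 0" "B > 0" "D > 0" unfolding A_def B_def D_def using LL_pos assms by auto
  have p2: "U > 0" "V > 0" unfolding U_def V_def by (intro one_minus_pos[OF assms]; simp)+
  have "D * (V + (1 - V) * U) / (A * U * (B * V)) = (1 - V) * (D / (A * (B * V))) + D / (A * U * B)"
    using p1 p2 by (simp add: field_simps)
  moreover have "r ^ Suc m = 1 - V" by (simp add: V_def)
  ultimately show ?thesis unfolding qb_def a b c d by (simp add: A_def B_def D_def)
qed

lemma qb_ratio: assumes "0 < r" "r < 1"
  shows "qb r m (Suc k) * qi r (Suc k) / qi r (m + Suc k) = qb r m k"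
proof -
  define A where "A = LL r 1 k"
  define B where "B = LL r 1 m"
  define D where "D = LL r 1 (m + k)"
  define U where "U = 1 - r ^ Suc k"
  define W where "W = 1 - r ^ Suc (m + k)"
  define R where "R = 1 - r"
  have a: "LL r 1 (m + Suc k) = D * W" by (simp add: LL_Suc D_def W_def)
  have c: "LL r 1 (Suc k) = A * U" by (simp add: LL_Suc A_def U_def)
  have p1: "A > 0" "B > 0" "D > 0" unfolding A_def B_def D_def using LL_pos assms by auto
  have p2: "U > 0" "W > 0" unfolding U_def W_def by (intro one_minus_pos[OF assms]; simp)+
  have p3: "R > 0" using assms by (simp add: R_def)
  have "D * W / (A * U * B) * (U / R) / (W / R) = D / (A * B)"
    using p1 p2 p3 by (simp add: field_simps)
  then show ?thesis unfolding qb_def qi_def a c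
    by (simp add: A_def B_def D_def U_def W_def R_def)
qed

lemma qb_ratio2: assumes "0 < r" "r < 1"
  shows "qb r (Suc (Suc m)) k / (qi r (Suc (Suc m) + k) * qi r (Suc m + k))
     = qb r m k / (qi r (Suc (Suc m)) * qi r (Suc m))"
proof -
  define A where "A = LL r 1 k"
  define B where "B = LL r 1 m"
  define D where "D = LL r 1 (m + k)"
  define U1 where "U1 = 1 - r ^ Suc m"
  define U2 where "U2 = 1 - r ^ Suc (Suc m)"
  define W1 where "W1 = 1 - r ^ Suc (m + k)"
  define W2 where "W2 = 1 - r ^ Suc (Suc (m + k))"
  define R where "R = 1 - r"
  have a: "LL r 1 (Suc (Suc m) + k) = D * W1 * W2"
    by (simp add: LL_Suc D_def W1_def W2_def)
  have c: "LL r 1 (Suc (Suc m)) = B * U1 * U2" by (simp add: LL_Suc B_def U1_def U2_def)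
  have p1: "A > 0" "B > 0" "D > 0" unfolding A_def B_def D_def using LL_pos assms by auto
  have p2: "U1 > 0" "U2 > 0" "W1 > 0" "W2 > 0" unfolding U1_def U2_def W1_def W2_def
    by (intro one_minus_pos[OF assms]; simp)+
  have p3: "R > 0" using assms by (simp add: R_def)
  have "D * W1 * W2 / (A * (B * U1 * U2)) / (W2 / R * (W1 / R))
     = D / (A * B) / (U2 / R * (U1 / R))"
    using p1 p2 p3 by (simp add: field_simps)
  then show ?thesis unfolding qb_def qi_def a c
    by (simp add: A_def B_def D_def U1_def U2_def W1_def W2_def R_def)
qed

lemma Px_Suc: "Px r x (Suc m) = Px r x m * (1 - r ^ m * x)"
  by (simp add: Px_def)

lemma rx_lt1: "0 < r \<Longrightarrow> r < 1 \<Longrightarrow> 0 \<le> x \<Longrightarrow> x < 1 \<Longrightarrow> r ^ m * x < (1::real)"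
proof -
  assume a: "0 < r" "r < 1" "0 \<le> x" "x < 1"
  have "r ^ m \<le> 1" using a by (simp add: power_le_one)
  hence "r ^ m * x \<le> x" using a by (simp add: mult_left_le_one_le)
  thus ?thesis using a by simp
qed

lemma Px_pos: "0 < r \<Longrightarrow> r < 1 \<Longrightarrow> 0 \<le> x \<Longrightarrow> x < 1 \<Longrightarrow> Px r x m > 0"
  unfolding Px_def by (intro prod_pos) (use rx_lt1 in auto)

lemma qb_gf: assumes r: "0 < r" "r < 1" and x: "0 \<le> x" "x < 1"
  shows "(\<lambda>k. qb r m k * x ^ k) sums (1 / Px r x (Suc m))"
proof (induction m)
  case 0
  have "(\<lambda>k. x ^ k) sums (1 / (1 - x))" using x by (intro geometric_sums) simp
  then show ?case using r by (simp add: Px_def)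
next
  case (Suc m)
  define a where "a k = qb r (Suc m) k * x ^ k" for k
  define b where "b k = qb r m k * x ^ k" for k
  define S where "S = 1 / Px r x (Suc m)"
  define c where "c = r ^ Suc m * x"
  have bS: "b sums S" using Suc by (simp add: b_def[abs_def] S_def)
  have c0: "0 \<le> c" "c < 1" using r x rx_lt1[OF r x, of "Suc m"] by (auto simp: c_def simp del: power_Suc)
  have a0: "a 0 = 1" "b 0 = 1" using r by (simp_all add: a_def b_def)
  have aS: "a (Suc k) = c * a k + b (Suc k)" for k
    using qb_pascal[OF r, of m k] by (simp add: a_def b_def c_def algebra_simps)
  have an: "a k \<ge> 0" for k using qb_pos[OF r, of "Suc m" k] x by (simp add: a_def)
  have bn: "b k \<ge> 0" for k using qb_pos[OF r, of m k] x by (simp add: b_def)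
  have bl: "sum b {..<n} \<le> S" for n
    using sum_le_suminf[of b "{..<n}"] bS bn by (auto simp: sums_iff)
  have ps: "sum a {..<n} \<le> S / (1 - c)" for n
  proof (induction n)
    case 0 have "S \<ge> 0" using bS bn by (auto simp: sums_iff intro: suminf_nonneg)
    then show ?case using c0 by simp
  next
    case (Suc n)
    have "sum a {..<Suc n} = c * sum a {..<n} + sum b {..<Suc n}"
      unfolding sum.lessThan_Suc_shift aS sum.distrib sum_distrib_left[symmetric] using a0 by simp
    also have "\<dots> \<le> c * (S / (1 - c)) + S"
      using Suc c0 bl[of "Suc n"] by (intro add_mono mult_left_mono) (auto simp del: sum.lessThan_Suc)
    also have "\<dots> = S / (1 - c)" using c0 by (simp add: field_simps)
    finally show ?case .
  qed
  have sa: "summable a" by (rule summableI_nonneg_bounded[OF an ps])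
  have "(\<lambda>k. a (Suc k)) sums (c * suminf a + (S - 1))"
    unfolding aS using sa bS a0 by (intro sums_add sums_mult) (auto simp: sums_Suc_iff)
  hence "suminf a - 1 = c * suminf a + (S - 1)"
    using suminf_split_head[OF sa] a0 by (simp add: sums_iff)
  hence "suminf a = S / (1 - c)" using c0 by (simp add: field_simps)
  moreover have "S / (1 - c) = 1 / Px r x (Suc (Suc m))"
    by (simp add: S_def c_def Px_Suc[of r x "Suc m"])
  ultimately show ?case using sa by (simp add: a_def[abs_def] sums_iff)
qed

lemma aux_div0: assumes "(A::real) > 0" "D > 0" "D = A + s * B"
  shows "M / D = M / A - s / A * (M * B / D)"
proof -
  have "M / A - s / A * (M * B / D) = (M * D - s * M * B) / (A * D)" using assms(1,2) by (simp add: field_simps)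
  also have "\<dots> = (M * A) / (A * D)" using assms(3) by (simp add: algebra_simps)
  also have "\<dots> = M / D" using assms(1,2) by simp
  finally show ?thesis by simp
qed

lemma aux_div: "(A::real) > 0 \<Longrightarrow> A + s * B > 0 \<Longrightarrow> M / (A + s * B) = M / A - s / A * (M * B / (A + s * B))"
  using aux_div0 by blast

context
  fixes r x :: real
  assumes r: "0 < r" "r < 1" and x: "0 \<le> x" "x < 1"
begin

lemma mm_sums: "(\<lambda>k. mm r n k x) sums 1"
proof -
  have "(\<lambda>k. (qb r n k * x ^ k) * Px r x (Suc n)) sums (1 / Px r x (Suc n) * Px r x (Suc n))"
    by (intro sums_mult2 qb_gf r x)
  then show ?thesis using Px_pos[OF r x, of "Suc n"] by (simp add: mm_def)
qed

lemma mm_nonneg: "mm r n k x \<ge> 0"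
  using qb_pos[OF r, of n k] Px_pos[OF r x, of "Suc n"] x by (simp add: mm_def)

lemma mm_shift: "mm r n (Suc k) x * qi r (Suc k) / qi r (n + Suc k) = x * mm r n k x"
proof -
  have "mm r n (Suc k) x * qi r (Suc k) / qi r (n + Suc k)
      = (qb r n (Suc k) * qi r (Suc k) / qi r (n + Suc k)) * x * (x ^ k * Px r x (Suc n))"
    by (simp add: mm_def)
  also have "\<dots> = x * mm r n k x" by (subst qb_ratio[OF r]) (simp add: mm_def)
  finally show ?thesis .
qed

lemma sumB: "(\<lambda>k. mm r n k x * qi r k / qi r (n + k)) sums x"
proof -
  define f where "f = (\<lambda>k. mm r n k x * qi r k / qi r (n + k))"
  have pt: "f (Suc k) = x * mm r n k x" for k unfolding f_def by (rule mm_shift)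
  have "(\<lambda>k. x * mm r n k x) sums (x * 1)" by (intro sums_mult mm_sums)
  then have "(\<lambda>k. f (Suc k)) sums x" by (simp add: pt)
  then have "f sums (x + f 0)" by (simp only: sums_Suc_iff)
  then show ?thesis by (simp add: f_def)
qed

lemma sumC: "(\<lambda>k. mm r (Suc m) k x / qi r (Suc m + k)) sums ((1 - r ^ Suc m * x) / qi r (Suc m))"
proof -
  define n where "n = Suc m"
  have qn: "qi r n > 0" using qi_pos[OF r] by (simp add: n_def)
  have pt: "mm r n k x / qi r (n + k) = mm r n k x / qi r n - r ^ n / qi r n * (mm r n k x * qi r k / qi r (n + k))" for k
  proof -
    have q: "qi r (n + k) > 0" using qi_pos[OF r] by (simp add: n_def)
    have e: "qi r (n + k) = qi r n + r ^ n * qi r k" by (rule qi_add) (use r in simp)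
    show ?thesis unfolding e using q qn e by (intro aux_div) auto
  qed
  have "(\<lambda>k. mm r n k x / qi r n - r ^ n / qi r n * (mm r n k x * qi r k / qi r (n + k)))
      sums (1 / qi r n - r ^ n / qi r n * x)"
    by (intro sums_diff sums_mult sums_divide mm_sums sumB)
  then have "(\<lambda>k. mm r n k x / qi r (n + k)) sums ((1 - r ^ n * x) / qi r n)"
    unfolding pt[symmetric] by (simp add: diff_divide_distrib)
  then show ?thesis by (simp add: n_def)
qed

lemma sumD: "(\<lambda>k. mm r (Suc (Suc m)) k x / (qi r (Suc (Suc m) + k) * qi r (Suc m + k)))
   sums ((1 - r ^ Suc m * x) * (1 - r ^ Suc (Suc m) * x) / (qi r (Suc (Suc m)) * qi r (Suc m)))"
proof -
  define C where "C = (1 - r ^ Suc m * x) * (1 - r ^ Suc (Suc m) * x) / (qi r (Suc (Suc m)) * qi r (Suc m))"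
  have pt: "mm r (Suc (Suc m)) k x / (qi r (Suc (Suc m) + k) * qi r (Suc m + k)) = mm r m k x * C" for k
  proof -
    have "mm r (Suc (Suc m)) k x / (qi r (Suc (Suc m) + k) * qi r (Suc m + k))
      = (qb r (Suc (Suc m)) k / (qi r (Suc (Suc m) + k) * qi r (Suc m + k))) * x ^ k * Px r x (Suc (Suc (Suc m)))"
      by (simp add: mm_def)
    also have "\<dots> = (qb r m k / (qi r (Suc (Suc m)) * qi r (Suc m))) * x ^ k * Px r x (Suc (Suc (Suc m)))"
      by (subst qb_ratio2[OF r]) (rule refl)
    also have "\<dots> = mm r m k x * C"
      unfolding mm_def C_def Px_Suc[of r x "Suc (Suc m)"] Px_Suc[of r x "Suc m"] by (simp add: ac_simps)
    finally show ?thesis .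
  qed
  have "(\<lambda>k. mm r m k x * C) sums (1 * C)" by (intro sums_mult2 mm_sums)
  then show ?thesis unfolding pt by (simp add: C_def)
qed

lemma sumE: "(\<lambda>k. mm r (Suc m) k x * qi r k / (qi r (Suc m + k) * qi r (m + k)))
   sums (x * ((1 - r ^ Suc m * x) / qi r (Suc m)))"
proof -
  define f where "f = (\<lambda>k. mm r (Suc m) k x * qi r k / (qi r (Suc m + k) * qi r (m + k)))"
  have pt: "f (Suc k) = x * (mm r (Suc m) k x / qi r (Suc m + k))" for k
  proof -
    have "f (Suc k) = (mm r (Suc m) (Suc k) x * qi r (Suc k) / qi r (Suc m + Suc k)) / qi r (Suc m + k)"
      unfolding f_def by (simp add: add_Suc_right)
    also have "\<dots> = x * (mm r (Suc m) k x / qi r (Suc m + k))" by (simp only: mm_shift) simp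
    finally show ?thesis .
  qed
  have "(\<lambda>k. x * (mm r (Suc m) k x / qi r (Suc m + k))) sums (x * ((1 - r ^ Suc m * x) / qi r (Suc m)))"
    by (intro sums_mult sumC)
  then have "(\<lambda>k. f (Suc k)) sums (x * ((1 - r ^ Suc m * x) / qi r (Suc m)))" by (simp only: pt)
  then have "f sums (x * ((1 - r ^ Suc m * x) / qi r (Suc m)) + f 0)" by (simp only: sums_Suc_iff)
  then show ?thesis by (simp add: f_def)
qed

lemma sumF: "(\<lambda>k. mm r (Suc (Suc m)) k x * qi r k * qi r (k - 1) / (qi r (Suc (Suc m) + k) * qi r (Suc m + k)))
   sums (x * x)"
proof -
  define f where "f = (\<lambda>k. mm r (Suc (Suc m)) k x * qi r k * qi r (k - 1) / (qi r (Suc (Suc m) + k) * qi r (Suc m + k)))"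
  have pt: "f (Suc k) = x * (mm r (Suc (Suc m)) k x * qi r k / qi r (Suc (Suc m) + k))" for k
  proof -
    have "f (Suc k) = (mm r (Suc (Suc m)) (Suc k) x * qi r (Suc k) / qi r (Suc (Suc m) + Suc k)) * qi r k / qi r (Suc (Suc m) + k)"
      unfolding f_def by (simp add: add_Suc_right)
    also have "\<dots> = x * (mm r (Suc (Suc m)) k x * qi r k / qi r (Suc (Suc m) + k))" by (simp only: mm_shift) simp
    finally show ?thesis .
  qed
  have "(\<lambda>k. x * (mm r (Suc (Suc m)) k x * qi r k / qi r (Suc (Suc m) + k))) sums (x * x)"
    by (intro sums_mult sumB)
  then have "(\<lambda>k. f (Suc k)) sums (x * x)" by (simp only: pt)
  then have "f sums (x * x + f 0)" by (simp only: sums_Suc_iff)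
  then show ?thesis by (simp add: f_def)
qed

end

lemma qbeta_alg: assumes "(U::real) > 0" "X > 0" "W > 0" "W = 1 - (1 - U) * t"
  shows "L / (U * X) - t * (L / (X * W)) = L * (1 - t) / (U * (X * W))"
proof -
  have "L / (U * X) - t * (L / (X * W)) = L * (W - t * U) / (U * (X * W))"
    using assms(1-3) by (simp add: field_simps)
  also have "W - t * U = 1 - t" using assms(4) by (simp add: algebra_simps)
  finally show ?thesis .
qed

lemma qbeta: assumes r: "0 < r" "r < 1"
  shows "a \<ge> 1 \<Longrightarrow> (\<lambda>j. r ^ (j * a) * LL r (Suc j) n) sums (LL r 1 n / LL r a (Suc n))"
proof (induction n arbitrary: a)
  case 0
  have "(\<lambda>j. (r ^ a) ^ j) sums (1 / (1 - r ^ a))"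
    using r 0 by (intro geometric_sums) (simp add: power_less_one_iff abs_of_pos)
  moreover have "(\<lambda>j. r ^ (j * a)) = (\<lambda>j. (r ^ a) ^ j)" by (simp add: power_mult[symmetric] mult.commute)
  ultimately show ?case by (simp add: LL_def)
next
  case (Suc n)
  have pt: "r ^ (j * a) * LL r (Suc j) (Suc n) = r ^ (j * a) * LL r (Suc j) n - r ^ Suc n * (r ^ (j * Suc a) * LL r (Suc j) n)" for j
  proof -
    have e: "r ^ (j * a) * r ^ (Suc j + n) = r ^ Suc n * r ^ (j * Suc a)"
      by (simp add: power_add[symmetric] algebra_simps)
    have "r ^ (j * a) * LL r (Suc j) (Suc n) = r ^ (j * a) * LL r (Suc j) n - (r ^ (j * a) * r ^ (Suc j + n)) * LL r (Suc j) n"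
      by (simp only: LL_Suc) (simp add: algebra_simps)
    also have "\<dots> = r ^ (j * a) * LL r (Suc j) n - r ^ Suc n * (r ^ (j * Suc a) * LL r (Suc j) n)"
      unfolding e by (simp add: algebra_simps)
    finally show ?thesis .
  qed
  have "(\<lambda>j. r ^ (j * a) * LL r (Suc j) n - r ^ Suc n * (r ^ (j * Suc a) * LL r (Suc j) n))
      sums (LL r 1 n / LL r a (Suc n) - r ^ Suc n * (LL r 1 n / LL r (Suc a) (Suc n)))"
    using Suc by (intro sums_diff sums_mult Suc.IH) auto
  moreover have "LL r 1 n / LL r a (Suc n) - r ^ Suc n * (LL r 1 n / LL r (Suc a) (Suc n))
     = LL r 1 (Suc n) / LL r a (Suc (Suc n))"
  proof -
    define U where "U = 1 - r ^ a"
    define X where "X = LL r (Suc a) n"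
    define W where "W = 1 - r ^ (Suc a + n)"
    have e1: "LL r a (Suc n) = U * X" by (simp add: LL_Suc' U_def X_def)
    have e2: "LL r (Suc a) (Suc n) = X * W" by (simp add: LL_Suc X_def W_def)
    have e3: "LL r a (Suc (Suc n)) = U * (X * W)" by (simp only: LL_Suc'[of r a "Suc n"] LL_Suc[of r "Suc a" n]) (simp add: U_def X_def W_def)
    have e4: "LL r 1 (Suc n) = LL r 1 n * (1 - r ^ Suc n)" by (simp add: LL_Suc)
    have p: "U > 0" "X > 0" "W > 0" unfolding U_def X_def W_def using Suc.prems
      by (intro one_minus_pos LL_pos r; simp)+
    have w: "W = 1 - (1 - U) * r ^ Suc n" by (simp add: U_def W_def power_add)
    show ?thesis unfolding e1 e2 e3 e4 by (rule qbeta_alg[OF p w])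
  qed
  ultimately show ?case unfolding pt by simp
qed

definition tri :: "nat \<Rightarrow> nat" where "tri n = n * (n - 1) div 2"

lemma tri_Suc: "tri (Suc n) = tri n + n"
proof -
  have "Suc n * (Suc n - 1) = n * (n - 1) + n * 2" by (cases n) (auto simp: algebra_simps)
  then show ?thesis unfolding tri_def by simp
qed

lemma tri_add: "tri (m + k) = tri m + tri k + m * k"
  by (induction k) (simp_all add: tri_def[of 0] tri_Suc)

lemma tri_alt: "n * (n + 1) div 2 = tri (Suc n)"
  unfolding tri_def by (simp add: mult.commute)

context
  fixes p q r :: real
  assumes pq: "0 < q" "q < p" and rdef: "r = q / p"
begin

lemma p_pos: "p > 0" using pq by simp
lemma r01: "0 < r" "r < 1" using pq by (auto simp: rdef field_simps)
lemma q_eq: "q = r * p" using p_pos by (simp add: rdef)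

lemma pq_int_conv: "pq_int p q n = p ^ (n - 1) * qi r n"
proof (cases n)
  case 0 then show ?thesis by (simp add: pq_int_def qi_def)
next
  case (Suc m)
  have r1: "1 - r \<noteq> 0" using r01 by simp
  have "pq_int p q n = p ^ n * (1 - r ^ n) / (p * (1 - r))"
    unfolding pq_int_def q_eq by (simp add: power_mult_distrib algebra_simps)
  also have "\<dots> = p ^ m * qi r n" using p_pos r1 by (simp add: Suc qi_def field_simps)
  finally show ?thesis by (simp add: Suc)
qed

definition QF :: "nat \<Rightarrow> real" where "QF N = (\<Prod>j=1..N. qi r j)"

lemma QF_LL: "QF N = LL r 1 N / (1 - r) ^ N"
proof (induction N)
  case 0 then show ?case by (simp add: QF_def)
next
  case (Suc N)
  have r1: "1 - r \<noteq> 0" using r01 by simp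
  have "QF (Suc N) = qi r (Suc N) * QF N" unfolding QF_def by (simp add: prod.nat_ivl_Suc')
  also have "\<dots> = LL r 1 (Suc N) / (1 - r) ^ Suc N"
    using r1 by (simp add: Suc qi_def LL_Suc field_simps)
  finally show ?case .
qed

lemma pq_fact_conv: "pq_fact p q N = p ^ tri N * QF N"
proof (induction N)
  case 0 then show ?case by (simp add: pq_fact_def QF_def tri_def)
next
  case (Suc N)
  have "pq_fact p q (Suc N) = pq_int p q (Suc N) * pq_fact p q N"
    unfolding pq_fact_def by (simp add: prod.nat_ivl_Suc')
  also have "\<dots> = p ^ tri (Suc N) * QF (Suc N)"
    unfolding Suc pq_int_conv QF_def by (simp add: prod.nat_ivl_Suc' tri_Suc power_add)
  finally show ?case .
qed

lemma pq_binom_conv: "pq_binom p q (m + k) k = p ^ (m * k) * qb r m k"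
proof -
  have r1: "1 - r > 0" using r01 by simp
  have pp: "p > 0" by (rule p_pos)
  have l: "LL r 1 k > 0" "LL r 1 m > 0" using LL_pos r01 by auto
  have "pq_binom p q (m + k) k = p ^ tri (m + k) * QF (m + k) / (p ^ tri k * QF k * (p ^ tri m * QF m))"
    unfolding pq_binom_def pq_fact_conv by simp
  also have "\<dots> = p ^ (m * k) * (QF (m + k) / (QF k * QF m))"
    unfolding tri_add power_add using pp by (simp add: field_simps)
  also have "QF (m + k) / (QF k * QF m) = qb r m k"
    unfolding QF_LL qb_def power_add using r1 l by (simp add: field_simps)
  finally show ?thesis .
qed

lemma pq_pow_conv: "pq_pow p q 1 (- u) n = p ^ tri n * (\<Prod>i<n. 1 - r ^ i * u)"
proof (induction n)
  case 0 then show ?case by (simp add: pq_pow_def tri_def)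
next
  case (Suc n)
  have "pq_pow p q 1 (- u) (Suc n) = pq_pow p q 1 (- u) n * (p ^ n - q ^ n * u)"
    by (simp add: pq_pow_def)
  also have "p ^ n - q ^ n * u = p ^ n * (1 - r ^ n * u)"
    unfolding q_eq by (simp add: power_mult_distrib algebra_simps)
  finally show ?case unfolding Suc by (simp add: tri_Suc power_add)
qed

lemma mkz_m_conv: "mkz_m p q n k x = mm r n k x"
proof -
  have pp: "p > 0" by (rule p_pos)
  have "mkz_m p q n k x = 1 / p ^ (k * n + tri (Suc n)) * (p ^ (n * k) * qb r n k) * x ^ k
       * (p ^ tri (Suc n) * Px r x (Suc n))"
    unfolding mkz_m_def tri_alt pq_binom_conv pq_pow_conv Px_def by simp
  also have "\<dots> = mm r n k x" unfolding mm_def power_add using pp by (simp add: field_simps)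
  finally show ?thesis .
qed

lemma mkz_b_conv: assumes "n \<ge> 1"
  shows "mkz_b p q n k u = p ^ (2 * k) * qb r (Suc n) k * u ^ k * (\<Prod>i<n. 1 - r ^ i * u)"
proof -
  have pp: "p > 0" by (rule p_pos)
  have e: "n + k + 1 = Suc n + k" by simp
  have e2: "Suc n * k = k * (n - 1) + 2 * k" using assms by (cases n) (auto simp: algebra_simps)
  have "mkz_b p q n k u = 1 / p ^ (k * (n - 1) + tri n) * (p ^ (Suc n * k) * qb r (Suc n) k) * u ^ k
       * (p ^ tri n * (\<Prod>i<n. 1 - r ^ i * u))"
    unfolding mkz_b_def e pq_binom_conv pq_pow_conv tri_def[symmetric] by simp
  also have "\<dots> = p ^ (2 * k) * qb r (Suc n) k * u ^ k * (\<Prod>i<n. 1 - r ^ i * u)"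
    unfolding e2 power_add using pp by (simp add: field_simps)
  finally show ?thesis .
qed

end

definition cs :: "real \<Rightarrow> nat \<Rightarrow> nat \<Rightarrow> nat \<Rightarrow> real" where
  "cs r n s k = LL r (Suc k) s / LL r (Suc (Suc n) + k) s"

context
  fixes p q r :: real
  assumes pq: "0 < q" "q < p" and rdef: "r = q / p"
begin

lemma integral_conv: assumes n: "n \<ge> 1"
  shows "pq_integral p q (\<lambda>t. mkz_b p q n k (q * t) * t ^ s) 1
    = (p - q) * (p ^ (2 * k) * qb r (Suc n) k * r ^ k / p ^ (s + 1)) * (LL r 1 n / LL r (Suc (k + s)) (Suc n))"
proof -
  have pp: "p > 0" using pq by simp
  have r: "0 < r" "r < 1" using r01[OF pq rdef] by auto
  define C where "C = p ^ (2 * k) * qb r (Suc n) k * r ^ k / p ^ (s + 1)"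
  have pt: "q ^ j / p ^ (j + 1) * (mkz_b p q n k (q * (q ^ j / p ^ (j + 1))) * (q ^ j / p ^ (j + 1)) ^ s)
     = C * (r ^ (j * Suc (k + s)) * LL r (Suc j) n)" for j
  proof -
    have t: "q ^ j / p ^ (j + 1) = r ^ j / p" using pp by (simp add: rdef power_divide)
    have qt: "q * (r ^ j / p) = r ^ Suc j" using pp by (simp add: rdef)
    have L: "(\<Prod>i<n. 1 - r ^ i * r ^ Suc j) = LL r (Suc j) n"
      unfolding LL_def by (rule prod.cong) (simp_all add: power_add ac_simps)
    show ?thesis unfolding t qt mkz_b_conv[OF pq rdef n] L C_def
      using pp by (simp add: power_divide power_mult_distrib power_add power_mult[symmetric] field_simps)
  qed
  have "(\<lambda>j. C * (r ^ (j * Suc (k + s)) * LL r (Suc j) n)) sums (C * (LL r 1 n / LL r (Suc (k + s)) (Suc n)))"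
    by (intro sums_mult qbeta r) simp
  then have "(\<Sum>j. q ^ j / p ^ (j + 1) * (mkz_b p q n k (q * (q ^ j / p ^ (j + 1))) * (q ^ j / p ^ (j + 1)) ^ s))
      = C * (LL r 1 n / LL r (Suc (k + s)) (Suc n))"
    unfolding pt by (simp add: sums_iff)
  then show ?thesis unfolding pq_integral_def C_def by simp
qed

lemma term_conv: assumes n: "n \<ge> 1"
  shows "mkz_m p q n k x * (p * q) powi (- int k) * pq_integral p q (\<lambda>t. mkz_b p q n k (q * t) * t ^ s) 1
    = mm r n k x * ((1 - r) * qb r (Suc n) k * (LL r 1 n / LL r (Suc (k + s)) (Suc n))) / p ^ s"
proof -
  have pp: "p > 0" using pq by simp
  have r: "0 < r" "r < 1" using r01[OF pq rdef] by auto
  have "(p * q) powi (- int k) * ((p - q) * (p ^ (2 * k) * r ^ k / p ^ (s + 1))) = (1 - r) / p ^ s"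
    unfolding power_int_minus power_int_of_nat q_eq[OF pq rdef] mult_2 power_add
    using pp r by (simp add: power_mult_distrib power_add field_simps mult_2 power_mult[symmetric])
  then show ?thesis unfolding integral_conv[OF n] mkz_m_conv[OF pq rdef]
    by (simp add: divide_inverse ac_simps) blast
qed

lemma cs_closed: "qi r (Suc n) * ((1 - r) * qb r (Suc n) k * (LL r 1 n / LL r (Suc (k + s)) (Suc n))) = cs r n s k"
proof -
  have r: "0 < r" "r < 1" using r01[OF pq rdef] by auto
  define A where "A = LL r 1 k"
  define B where "B = LL r (Suc k) s"
  define C where "C = LL r (Suc (k + s)) (Suc n)"
  define D where "D = LL r 1 (Suc n + k)"
  define E where "E = LL r (Suc (Suc n) + k) s"
  define F where "F = LL r 1 n"
  have key: "A * B * C = D * E"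
  proof -
    have "A * B * C = LL r 1 (k + s + Suc n)" unfolding A_def B_def C_def LL_add by simp
    also have "\<dots> = LL r 1 (Suc n + k + s)" by (simp add: ac_simps)
    also have "\<dots> = D * E" unfolding D_def E_def LL_add by simp
    finally show ?thesis .
  qed
  have pos: "A > 0" "B > 0" "C > 0" "D > 0" "E > 0" "F > 0"
    unfolding A_def B_def C_def D_def E_def F_def by (intro LL_pos r; simp)+
  have u: "1 - r ^ Suc n > 0" by (intro one_minus_pos r) simp
  have r1: "1 - r > 0" using r by simp
  have "qi r (Suc n) * ((1 - r) * qb r (Suc n) k * (LL r 1 n / LL r (Suc (k + s)) (Suc n)))
     = (1 - r ^ Suc n) * (D / (A * (F * (1 - r ^ Suc n))) * (F / C))"
    unfolding qi_def qb_def using r1 by (simp add: LL_Suc A_def D_def F_def C_def)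
  also have "\<dots> = D / (A * C)" using pos u by (simp add: field_simps)
  also have "\<dots> = B / E" using pos key by (simp add: field_simps)
  finally show ?thesis by (simp add: cs_def B_def E_def)
qed

lemma cs_nonneg: "cs r n s k \<ge> 0"
proof -
  have r: "0 < r" "r < 1" using r01[OF pq rdef] by auto
  show ?thesis unfolding cs_def using LL_pos[OF r, of "Suc k" s] LL_pos[OF r, of "Suc (Suc n) + k" s] by simp
qed

lemma cs_le1: "cs r n s k \<le> 1"
proof -
  have r: "0 < r" "r < 1" using r01[OF pq rdef] by auto
  have "LL r (Suc k) s \<le> LL r (Suc (Suc n) + k) s"
    unfolding LL_def
  proof (rule prod_mono)
    fix i assume "i \<in> {..<s}"
    have "r ^ (Suc k + i) < 1" by (intro r_pow_lt1 r) simp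
    moreover have "r ^ (Suc (Suc n) + k + i) \<le> r ^ (Suc k + i)" using r by (intro power_decreasing) auto
    ultimately show "0 \<le> 1 - r ^ (Suc k + i) \<and> 1 - r ^ (Suc k + i) \<le> 1 - r ^ (Suc (Suc n) + k + i)" by simp
  qed
  then show ?thesis unfolding cs_def using LL_pos[OF r, of "Suc (Suc n) + k" s] by simp
qed

lemma durr_conv: assumes n: "n \<ge> 1" and x: "0 \<le> x" "x < 1"
  shows "mkz_durrmeyer p q n (\<lambda>t. t ^ s) x = (\<Sum>k. mm r n k x * cs r n s k) / p ^ s"
    and "summable (\<lambda>k. mm r n k x * cs r n s k)"
proof -
  have r: "0 < r" "r < 1" using r01[OF pq rdef] by auto
  have pp: "p > 0" using pq by simp
  have qn: "qi r (Suc n) > 0" using qi_pos[OF r] by simp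
  show sm: "summable (\<lambda>k. mm r n k x * cs r n s k)"
  proof (rule summable_comparison_test'[where g = "\<lambda>k. mm r n k x"])
    show "summable (\<lambda>k. mm r n k x)" using mm_sums[OF r x] by (simp add: sums_iff)
    fix k show "norm (mm r n k x * cs r n s k) \<le> mm r n k x"
      using mm_nonneg[OF r x, of n k] cs_nonneg[of n s k] cs_le1[of n s k]
      by (simp add: abs_mult mult_left_le)
  qed
  define V where "V = (\<Sum>k. mm r n k x * cs r n s k)"
  have "(\<lambda>k. mm r n k x * cs r n s k / (qi r (Suc n) * p ^ s)) sums (V / (qi r (Suc n) * p ^ s))"
    using sm unfolding V_def by (intro sums_divide summable_sums)
  moreover have "mkz_m p q n k x * (p * q) powi (- int k) * pq_integral p q (\<lambda>t. mkz_b p q n k (q * t) * t ^ s) 1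
      = mm r n k x * cs r n s k / (qi r (Suc n) * p ^ s)" for k
  proof -
    have "cs r n s k / qi r (Suc n) = ((1 - r) * qb r (Suc n) k * (LL r 1 n / LL r (Suc (k + s)) (Suc n)))"
      using cs_closed[of n k s] qn by (simp add: field_simps)
    moreover have "mm r n k x * cs r n s k / (qi r (Suc n) * p ^ s) = mm r n k x * (cs r n s k / qi r (Suc n)) / p ^ s"
      by simp
    ultimately show ?thesis unfolding term_conv[OF n] by simp
  qed
  ultimately have "(\<Sum>k. mkz_m p q n k x * (p * q) powi (- int k) * pq_integral p q (\<lambda>t. mkz_b p q n k (q * t) * t ^ s) 1)
     = V / (qi r (Suc n) * p ^ s)" by (simp add: sums_iff)
  moreover have "pq_int p q (n + 1) / p ^ n = qi r (Suc n)"
    using pp by (simp add: pq_int_conv[OF pq rdef])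
  ultimately show "mkz_durrmeyer p q n (\<lambda>t. t ^ s) x = V / p ^ s"
    unfolding mkz_durrmeyer_def using x qn by simp
qed

end

lemma qi_1: "r < 1 \<Longrightarrow> qi r (Suc 0) = 1" by (simp add: qi_def)

lemma qi_Suc: "r < 1 \<Longrightarrow> qi r (Suc k) = 1 + r * qi r k"
  using qi_add[of r 1 k] by (simp add: qi_1)

lemma qi_SS: "r < 1 \<Longrightarrow> qi r (Suc (Suc k)) = (1 + r) + r\<^sup>2 * qi r k"
  using qi_add[of r 2 k] by (simp add: qi_def field_simps power2_eq_square)

lemma qi_sq: "r < 1 \<Longrightarrow> qi r k * qi r k = qi r k + r * (qi r k * qi r (k - 1))"
  by (cases k) (simp_all add: qi_Suc algebra_simps)

lemma L1: fixes K A B C r :: real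
  assumes "K \<ge> 0" "A > 0" "C \<ge> 0" "C \<le> B" "B = (1 + r) + r\<^sup>2 * A" "r > 0" "C = 0 \<Longrightarrow> K = 0" "K \<le> 1 + r * K"
  shows "K / r\<^sup>2 / A - (1 + r) / r\<^sup>2 * (K / (A * C)) \<le> (1 + r * K) / B"
proof (cases "C = 0")
  case True
  then show ?thesis using assms by simp
next
  case False
  then have C: "C > 0" using assms by simp
  have B: "B > 0" using assms by (simp add: add_pos_nonneg)
  have "K / r\<^sup>2 / A - (1 + r) / r\<^sup>2 * (K / (A * C)) = K * (C - (1 + r)) / (r\<^sup>2 * A * C)"
    using assms C by (simp add: field_simps)
  also have "\<dots> \<le> K / B"
  proof -
    have "(C - (1 + r)) * B \<le> r\<^sup>2 * A * C"
    proof -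
      have "(C - (1 + r)) * B = C * (B - (1 + r)) + (1 + r) * (C - B)" by (simp add: algebra_simps)
      also have "\<dots> \<le> C * (B - (1 + r))" using assms by (simp add: mult_nonneg_nonpos)
      also have "\<dots> = r\<^sup>2 * A * C" using assms by simp
      finally show ?thesis .
    qed
    then have "K * ((C - (1 + r)) * B) \<le> K * (r\<^sup>2 * A * C)" using assms by (intro mult_left_mono) auto
    then show ?thesis using B C assms by (simp add: divide_le_eq le_divide_eq field_simps)
  qed
  also have "\<dots> \<le> (1 + r * K) / B" using B assms by (intro divide_right_mono) auto
  finally show ?thesis .
qed

lemma L2: fixes N A C B1 B2 r :: real
  assumes "N \<ge> 0" "A > 0" "C > 0" "r > 0" "r\<^sup>2 * A \<le> B1" "r ^ 4 * C \<le> B2"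
  shows "N / (B1 * B2) \<le> N / (r ^ 6 * (A * C))"
proof -
  have "r ^ 6 * (A * C) = (r\<^sup>2 * A) * (r ^ 4 * C)" by (simp add: power_add[symmetric] ac_simps)
  also have "\<dots> \<le> B1 * B2"
  proof -
    have "r\<^sup>2 * A > 0" "r ^ 4 * C > 0" using assms by simp_all
    then have "B1 \<ge> 0" "r ^ 4 * C \<ge> 0" using assms by linarith+
    then show ?thesis using assms by (intro mult_mono) auto
  qed
  finally have "r ^ 6 * (A * C) \<le> B1 * B2" .
  moreover have "r ^ 6 * (A * C) > 0" using assms by simp
  ultimately have "B1 * B2 > 0" "r ^ 6 * (A * C) > 0" by linarith+
  then have "0 < (B1 * B2) * (r ^ 6 * (A * C))" by (rule mult_pos_pos)
  then show ?thesis using assms \<open>r ^ 6 * (A * C) \<le> B1 * B2\<close> by (intro divide_left_mono) auto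
qed

lemma P1: fixes mm K A B r :: real
  assumes "mm \<ge> 0" "K \<ge> 0" "A > 0" "r > 0" "r\<^sup>2 * A \<le> B"
  shows "mm * ((1 + r * K) / B) \<le> 1 / r * (mm * K / A) + 1 / r\<^sup>2 * (mm / A)"
proof -
  have "r\<^sup>2 * A > 0" using assms by simp
  moreover then have "B > 0" using assms by linarith
  ultimately have "0 < B * (r\<^sup>2 * A)" by (metis mult_pos_pos)
  then have "(1 + r * K) / B \<le> (1 + r * K) / (r\<^sup>2 * A)"
    using assms by (intro divide_left_mono) auto
  also have "\<dots> = 1 / r * (K / A) + 1 / r\<^sup>2 * (1 / A)"
    using assms by (simp add: field_simps power2_eq_square)
  finally have "mm * ((1 + r * K) / B) \<le> mm * (1 / r * (K / A) + 1 / r\<^sup>2 * (1 / A))"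
    using assms by (intro mult_left_mono) auto
  then show ?thesis by (simp add: algebra_simps)
qed

lemma P2: fixes mm K A B C r :: real
  assumes "mm \<ge> 0" "K \<ge> 0" "A > 0" "C \<ge> 0" "C \<le> B" "B = (1 + r) + r\<^sup>2 * A" "r > 0" "C = 0 \<Longrightarrow> K = 0" "K \<le> 1 + r * K"
  shows "1 / r\<^sup>2 * (mm * K / A) - (1 + r) / r\<^sup>2 * (mm * K / (A * C)) \<le> mm * ((1 + r * K) / B)"
proof -
  have "mm * (K / r\<^sup>2 / A - (1 + r) / r\<^sup>2 * (K / (A * C))) \<le> mm * ((1 + r * K) / B)"
    using assms by (intro mult_left_mono L1) auto
  moreover have "mm * (K / r\<^sup>2 / A - (1 + r) / r\<^sup>2 * (K / (A * C)))
     = 1 / r\<^sup>2 * (mm * K / A) - (1 + r) / r\<^sup>2 * (mm * K / (A * C))"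
    by (simp add: algebra_simps)
  ultimately show ?thesis by simp
qed

lemma P3: fixes mm N K K1 A C B1 B2 r :: real
  assumes "mm \<ge> 0" "N \<ge> 0" "A > 0" "C > 0" "r > 0" "r\<^sup>2 * A \<le> B1" "r ^ 4 * C \<le> B2"
    "N = (1 + r) + (r + 2 * r\<^sup>2 + r ^ 3) * K + r ^ 4 * (K * K1)"
  shows "mm * (N / (B1 * B2)) \<le> (1 + r) / r ^ 6 * (mm / (A * C)) + (r + 2 * r\<^sup>2 + r ^ 3) / r ^ 6 * (mm * K / (A * C))
     + 1 / r\<^sup>2 * (mm * K * K1 / (A * C))"
proof -
  have "mm * (N / (B1 * B2)) \<le> mm * (N / (r ^ 6 * (A * C)))"
    using assms by (intro mult_left_mono L2) auto
  also have "\<dots> = (1 + r) / r ^ 6 * (mm / (A * C)) + (r + 2 * r\<^sup>2 + r ^ 3) / r ^ 6 * (mm * K / (A * C))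
     + r ^ 4 / r ^ 6 * (mm * K * K1 / (A * C))"
    unfolding assms(8) by (simp add: algebra_simps add_divide_distrib)
  also have "r ^ 4 / r ^ 6 = 1 / r\<^sup>2" using assms by (simp add: field_simps power2_eq_square eval_nat_numeral)
  finally show ?thesis .
qed

context
  fixes p q r :: real
  assumes pq: "0 < q" "q < p" and rdef: "r = q / p"
begin

lemma rr: "0 < r" "r < 1" using r01[OF pq rdef] by auto

lemma cs0: "cs r n 0 k = 1"
  by (simp add: cs_def)

lemma cs1: "cs r n 1 k = qi r (Suc k) / qi r (Suc (Suc n) + k)"
  using rr unfolding cs_def qi_def rdef[symmetric] by (simp add: LL_def)

lemma cs2: "cs r n 2 k = qi r (Suc k) * qi r (Suc (Suc k)) / (qi r (Suc (Suc n) + k) * qi r (Suc (Suc (Suc n) + k)))"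
proof -
  have L2: "LL r a 2 = (1 - r ^ a) * (1 - r ^ Suc a)" for a by (simp add: LL_def numeral_2_eq_2)
  have g: "c \<noteq> 0 \<Longrightarrow> d \<noteq> 0 \<Longrightarrow> R \<noteq> 0 \<Longrightarrow> a * b / (c * d) = (a / R) * (b / R) / ((c / R) * (d / R))"
    for a b c d R :: real by (simp add: field_simps)
  have "1 - r ^ (Suc (Suc n) + k) > 0" "1 - r ^ Suc (Suc (Suc n) + k) > 0" by (intro one_minus_pos rr; simp)+
  then show ?thesis unfolding cs_def L2 qi_def using rr by (intro g) auto
qed

lemma e1_upper_sum: assumes x: "0 \<le> x" "x < 1"
  shows "(\<Sum>k. mm r (Suc m) k x * cs r (Suc m) 1 k) \<le> x / r + (1 - r ^ Suc m * x) / (r\<^sup>2 * qi r (Suc m))"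
proof -
  have f: "(\<lambda>k. mm r (Suc m) k x * cs r (Suc m) 1 k) sums (\<Sum>k. mm r (Suc m) k x * cs r (Suc m) 1 k)"
    using durr_conv(2)[OF pq rdef _ x, of "Suc m" 1] by (simp add: summable_sums)
  have g: "(\<lambda>k. 1 / r * (mm r (Suc m) k x * qi r k / qi r (Suc m + k)) + 1 / r\<^sup>2 * (mm r (Suc m) k x / qi r (Suc m + k)))
     sums (1 / r * x + 1 / r\<^sup>2 * ((1 - r ^ Suc m * x) / qi r (Suc m)))"
    by (intro sums_add sums_mult sumB sumC rr x)
  have le: "mm r (Suc m) k x * cs r (Suc m) 1 k \<le> 1 / r * (mm r (Suc m) k x * qi r k / qi r (Suc m + k)) + 1 / r\<^sup>2 * (mm r (Suc m) k x / qi r (Suc m + k))" for k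
  proof -
    have e: "Suc (Suc (Suc m)) + k = 2 + (Suc m + k)" by simp
    have B: "r\<^sup>2 * qi r (Suc m + k) \<le> qi r (Suc (Suc (Suc m)) + k)" unfolding e by (rule qi_ge[OF rr])
    show ?thesis unfolding cs1 qi_Suc[OF rr(2)]
      using mm_nonneg[OF rr x] qi_nonneg[OF rr] qi_pos[OF rr] rr B by (intro P1) auto
  qed
  have "(\<Sum>k. mm r (Suc m) k x * cs r (Suc m) 1 k) \<le> 1 / r * x + 1 / r\<^sup>2 * ((1 - r ^ Suc m * x) / qi r (Suc m))"
    by (rule sums_le[OF le f g])
  then show ?thesis by simp
qed

lemma e1_lower_sum: assumes x: "0 \<le> x" "x < 1"
  shows "x / r\<^sup>2 - (1 + r) / r\<^sup>2 * (x * ((1 - r ^ Suc m * x) / qi r (Suc m))) \<le> (\<Sum>k. mm r (Suc m) k x * cs r (Suc m) 1 k)"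
proof -
  have f: "(\<lambda>k. mm r (Suc m) k x * cs r (Suc m) 1 k) sums (\<Sum>k. mm r (Suc m) k x * cs r (Suc m) 1 k)"
    using durr_conv(2)[OF pq rdef _ x, of "Suc m" 1] by (simp add: summable_sums)
  have g: "(\<lambda>k. 1 / r\<^sup>2 * (mm r (Suc m) k x * qi r k / qi r (Suc m + k)) - (1 + r) / r\<^sup>2 * (mm r (Suc m) k x * qi r k / (qi r (Suc m + k) * qi r (m + k))))
     sums (1 / r\<^sup>2 * x - (1 + r) / r\<^sup>2 * (x * ((1 - r ^ Suc m * x) / qi r (Suc m))))"
    by (intro sums_diff sums_mult sumB sumE rr x)
  have le: "1 / r\<^sup>2 * (mm r (Suc m) k x * qi r k / qi r (Suc m + k)) - (1 + r) / r\<^sup>2 * (mm r (Suc m) k x * qi r k / (qi r (Suc m + k) * qi r (m + k)))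
      \<le> mm r (Suc m) k x * cs r (Suc m) 1 k" for k
  proof -
    have e: "Suc (Suc (Suc m)) + k = Suc (Suc (Suc m + k))" by simp
    have B: "qi r (Suc (Suc (Suc m)) + k) = (1 + r) + r\<^sup>2 * qi r (Suc m + k)" unfolding e by (rule qi_SS[OF rr(2)])
    have C: "qi r (m + k) \<le> qi r (Suc (Suc (Suc m)) + k)"
      using qi_mono[OF rr, of "m + k" "Suc (Suc (Suc 0))"] by (simp add: add.commute add.left_commute)
    have Z: "qi r (m + k) = 0 \<Longrightarrow> qi r k = 0"
      using qi_pos[OF rr, of "m + k"] by (cases k) auto
    have K: "qi r k \<le> 1 + r * qi r k" using qi_mono[OF rr, of k 1] qi_Suc[OF rr(2), of k] by simp
    show ?thesis unfolding cs1 qi_Suc[OF rr(2)]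
      using mm_nonneg[OF rr x] qi_nonneg[OF rr] qi_pos[OF rr] rr B C Z K by (intro P2) auto
  qed
  have "1 / r\<^sup>2 * x - (1 + r) / r\<^sup>2 * (x * ((1 - r ^ Suc m * x) / qi r (Suc m))) \<le> (\<Sum>k. mm r (Suc m) k x * cs r (Suc m) 1 k)"
    by (rule sums_le[OF le g f])
  then show ?thesis by simp
qed

lemma e2_upper_sum: assumes x: "0 \<le> x" "x < 1"
  shows "(\<Sum>k. mm r (Suc (Suc m)) k x * cs r (Suc (Suc m)) 2 k)
    \<le> (1 + r) / r ^ 6 * ((1 - r ^ Suc m * x) * (1 - r ^ Suc (Suc m) * x) / (qi r (Suc (Suc m)) * qi r (Suc m)))
      + (r + 2 * r\<^sup>2 + r ^ 3) / r ^ 6 * (x * ((1 - r ^ Suc (Suc m) * x) / qi r (Suc (Suc m))))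
      + 1 / r\<^sup>2 * (x * x)"
proof -
  define n where "n = Suc (Suc m)"
  have f: "(\<lambda>k. mm r n k x * cs r n 2 k) sums (\<Sum>k. mm r n k x * cs r n 2 k)"
    using durr_conv(2)[OF pq rdef _ x, of n 2] by (simp add: summable_sums n_def)
  have g: "(\<lambda>k. (1 + r) / r ^ 6 * (mm r n k x / (qi r (n + k) * qi r (Suc m + k)))
      + (r + 2 * r\<^sup>2 + r ^ 3) / r ^ 6 * (mm r n k x * qi r k / (qi r (n + k) * qi r (Suc m + k)))
      + 1 / r\<^sup>2 * (mm r n k x * qi r k * qi r (k - 1) / (qi r (n + k) * qi r (Suc m + k))))
     sums ((1 + r) / r ^ 6 * ((1 - r ^ Suc m * x) * (1 - r ^ Suc (Suc m) * x) / (qi r (Suc (Suc m)) * qi r (Suc m)))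
      + (r + 2 * r\<^sup>2 + r ^ 3) / r ^ 6 * (x * ((1 - r ^ Suc (Suc m) * x) / qi r (Suc (Suc m))))
      + 1 / r\<^sup>2 * (x * x))"
    unfolding n_def by (intro sums_add sums_mult sumD sumE[of r x "Suc m"] sumF rr x)
  have le: "mm r n k x * cs r n 2 k \<le> (1 + r) / r ^ 6 * (mm r n k x / (qi r (n + k) * qi r (Suc m + k)))
      + (r + 2 * r\<^sup>2 + r ^ 3) / r ^ 6 * (mm r n k x * qi r k / (qi r (n + k) * qi r (Suc m + k)))
      + 1 / r\<^sup>2 * (mm r n k x * qi r k * qi r (k - 1) / (qi r (n + k) * qi r (Suc m + k)))" for k
  proof -
    have e1: "Suc (Suc n) + k = 2 + (n + k)" by simp
    have B1: "r\<^sup>2 * qi r (n + k) \<le> qi r (Suc (Suc n) + k)" unfolding e1 by (rule qi_ge[OF rr])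
    have e2: "Suc (Suc (Suc n) + k) = 4 + (Suc m + k)" by (simp add: n_def)
    have B2: "r ^ 4 * qi r (Suc m + k) \<le> qi r (Suc (Suc (Suc n) + k))" unfolding e2 by (rule qi_ge[OF rr])
    have N: "qi r (Suc k) * qi r (Suc (Suc k)) = (1 + r) + (r + 2 * r\<^sup>2 + r ^ 3) * qi r k + r ^ 4 * (qi r k * qi r (k - 1))"
    proof -
      have "qi r (Suc k) * qi r (Suc (Suc k)) = (1 + r * qi r k) * ((1 + r) + r\<^sup>2 * qi r k)"
        unfolding qi_SS[OF rr(2), of k] qi_Suc[OF rr(2), of k] ..
      also have "\<dots> = (1 + r) + (r + 2 * r\<^sup>2) * qi r k + r ^ 3 * (qi r k * qi r k)"
        by (simp add: algebra_simps power2_eq_square eval_nat_numeral)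
      also have "\<dots> = (1 + r) + (r + 2 * r\<^sup>2 + r ^ 3) * qi r k + r ^ 4 * (qi r k * qi r (k - 1))"
        unfolding qi_sq[OF rr(2)] by (simp add: algebra_simps eval_nat_numeral)
      finally show ?thesis .
    qed
    have Np: "qi r (Suc k) * qi r (Suc (Suc k)) \<ge> 0" using qi_nonneg[OF rr] by simp
    show ?thesis unfolding cs2
      using mm_nonneg[OF rr x] qi_pos[OF rr] rr B1 B2 N Np by (intro P3) (auto simp: n_def)
  qed
  have "(\<Sum>k. mm r n k x * cs r n 2 k) \<le> (1 + r) / r ^ 6 * ((1 - r ^ Suc m * x) * (1 - r ^ Suc (Suc m) * x) / (qi r (Suc (Suc m)) * qi r (Suc m)))
      + (r + 2 * r\<^sup>2 + r ^ 3) / r ^ 6 * (x * ((1 - r ^ Suc (Suc m) * x) / qi r (Suc (Suc m))))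
      + 1 / r\<^sup>2 * (x * x)"
    by (rule sums_le[OF le f g])
  then show ?thesis by (simp add: n_def)
qed

end

lemma pq_int_Suc: "p \<noteq> q \<Longrightarrow> pq_int p q (Suc n) = p ^ n + q * pq_int p q n"
  unfolding pq_int_def by (simp add: field_simps)

lemma eq1: fixes p r Q M x Y :: real
  assumes "p > 0" "r > 0" "Q > 0" "M > 0"
  shows "(x / r + Y / (r\<^sup>2 * Q)) / p = x / (r * p) + p * M * Y / ((r * p)\<^sup>2 * (M * Q))"
  using assms by (simp add: field_simps power2_eq_square)

lemma eq1b: fixes p r Q M x :: real
  assumes "p > 0" "r > 0" "Q > 0" "M > 0"
  shows "(x / r\<^sup>2 - (1 + r) / r\<^sup>2 * (x / Q)) / p - x / (r * p)\<^sup>2 * (1 - (r * p + 1) / (M * Q))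
    = x / (r * p)\<^sup>2 * ((1 + r * p - (p + r * p) * M - (1 - p) * (M * Q)) / (M * Q))"
  using assms by (simp add: field_simps power2_eq_square)

lemma eq2: fixes p r Q1 Q2 M x Y1 Y2 :: real
  assumes "p > 0" "r > 0" "Q1 > 0" "Q2 > 0" "M > 0"
  shows "((1 + r) / r ^ 6 * (Y1 * Y2 / (Q2 * Q1)) + (r + 2 * r\<^sup>2 + r ^ 3) / r ^ 6 * (x * (Y2 / Q2)) + 1 / r\<^sup>2 * (x * x)) / p\<^sup>2
    = x\<^sup>2 / (r * p)\<^sup>2 + (p + r * p)\<^sup>2 / (r * p) ^ 5 * ((p * p * M * Y2) / (p * M * Q2)) * x
      + p * (p + r * p) / (r * p) ^ 6 * ((p * p * M * Y2) * (p * M * Y1)) / ((p * M * Q2) * (M * Q1))"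
  using assms by (simp add: field_simps power2_eq_square eval_nat_numeral)

context
  fixes p q :: real
  assumes pq: "0 < q" "q < p" and p1: "p \<le> 1"
begin

lemma pq_int_pos: "n \<ge> 1 \<Longrightarrow> pq_int p q n > 0"
  unfolding pq_int_def using pq by (simp add: power_strict_mono)

lemma fpos: "0 \<le> 1 + q - (p + q) * p ^ m - (1 - p) * pq_int p q (Suc m)"
proof (induction m)
  case 0 then show ?case using pq by (simp add: pq_int_def)
next
  case (Suc m)
  have qm: "q ^ Suc m \<le> q" using pq p1 by (simp add: mult_left_le power_le_one)
  have e: "1 + q - (p + q) * p ^ Suc m - (1 - p) * pq_int p q (Suc (Suc m))
    = p * (1 + q - (p + q) * p ^ m - (1 - p) * pq_int p q (Suc m)) + (1 - p) * (1 + q - q ^ Suc m)"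
    using pq unfolding pq_int_Suc[of p q "Suc m"] pq_int_def by (simp add: field_simps)
  have nn: "1 + q - q ^ Suc m \<ge> 0" using qm pq by linarith
  have "0 \<le> 1 - p" using p1 by simp
  show ?case unfolding e using Suc pq nn \<open>0 \<le> 1 - p\<close> by (intro add_nonneg_nonneg mult_nonneg_nonneg) auto
qed

lemma gle: "(1 - q) * pq_int p q n \<le> 1"
proof (induction n)
  case 0 then show ?case by (simp add: pq_int_def)
next
  case (Suc n)
  have "(1 - q) * pq_int p q (Suc n) = (1 - q) * p ^ n + q * ((1 - q) * pq_int p q n)"
    using pq by (simp add: pq_int_Suc algebra_simps)
  also have "\<dots> \<le> (1 - q) * 1 + q * 1"
    using Suc pq p1 by (intro add_mono mult_left_mono power_le_one) auto
  finally show ?case by simp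
qed

lemma e1_upper: assumes x: "0 \<le> x" "x < 1"
  shows "mkz_durrmeyer p q (Suc m) (\<lambda>t. t) x \<le> x / q + (p ^ Suc m - q ^ Suc m * x) / (q\<^sup>2 * pq_int p q (Suc m))"
proof -
  define r where "r = q / p"
  have r: "0 < r" "r < 1" using r01[OF pq r_def] by auto
  have pp: "p > 0" using pq by simp
  have Q: "qi r (Suc m) > 0" using qi_pos[OF r] by simp
  have f: "(\<lambda>t::real. t) = (\<lambda>t. t ^ 1)" by simp
  have "mkz_durrmeyer p q (Suc m) (\<lambda>t. t) x = (\<Sum>k. mm r (Suc m) k x * cs r (Suc m) 1 k) / p"
    unfolding f using durr_conv(1)[OF pq r_def _ x, of "Suc m" 1] by simp
  also have "\<dots> \<le> (x / r + (1 - r ^ Suc m * x) / (r\<^sup>2 * qi r (Suc m))) / p"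
    using e1_upper_sum[OF pq r_def x] pp by (intro divide_right_mono) auto
  also have "\<dots> = x / (r * p) + p * p ^ m * (1 - r ^ Suc m * x) / ((r * p)\<^sup>2 * (p ^ m * qi r (Suc m)))"
    using pp r Q by (intro eq1) auto
  also have "\<dots> = x / q + (p ^ Suc m - q ^ Suc m * x) / (q\<^sup>2 * pq_int p q (Suc m))"
    unfolding pq_int_conv[OF pq r_def] unfolding q_eq[OF pq r_def] by (simp add: power_mult_distrib algebra_simps)
  finally show ?thesis .
qed

lemma e1_lower: assumes x: "0 \<le> x" "x < 1"
  shows "x / q\<^sup>2 * (1 - (q + 1) / pq_int p q (Suc m)) \<le> mkz_durrmeyer p q (Suc m) (\<lambda>t. t) x"
proof -
  define r where "r = q / p"
  have r: "0 < r" "r < 1" using r01[OF pq r_def] by auto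
  have pp: "p > 0" using pq by simp
  have Q: "qi r (Suc m) > 0" using qi_pos[OF r] by simp
  have M: "p ^ m > 0" using pp by simp
  have f: "(\<lambda>t::real. t) = (\<lambda>t. t ^ 1)" by simp
  have "x / q\<^sup>2 * (1 - (q + 1) / pq_int p q (Suc m)) = x / (r * p)\<^sup>2 * (1 - (r * p + 1) / (p ^ m * qi r (Suc m)))"
    unfolding pq_int_conv[OF pq r_def] unfolding q_eq[OF pq r_def] by simp
  also have "\<dots> \<le> (x / r\<^sup>2 - (1 + r) / r\<^sup>2 * (x / qi r (Suc m))) / p"
  proof -
    have F: "0 \<le> 1 + r * p - (p + r * p) * p ^ m - (1 - p) * (p ^ m * qi r (Suc m))"
      using fpos[of m] unfolding pq_int_conv[OF pq r_def] unfolding q_eq[OF pq r_def] by simp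
    have "0 \<le> x / (r * p)\<^sup>2 * ((1 + r * p - (p + r * p) * p ^ m - (1 - p) * (p ^ m * qi r (Suc m))) / (p ^ m * qi r (Suc m)))"
      using F x M Q r pp by (intro mult_nonneg_nonneg divide_nonneg_pos) auto
    then show ?thesis unfolding eq1b[OF pp r(1) Q M, symmetric] by simp
  qed
  also have "\<dots> \<le> (x / r\<^sup>2 - (1 + r) / r\<^sup>2 * (x * ((1 - r ^ Suc m * x) / qi r (Suc m)))) / p"
  proof -
    have "x * ((1 - r ^ Suc m * x) / qi r (Suc m)) \<le> x / qi r (Suc m)"
    proof -
      have "0 \<le> r ^ Suc m * x" using r x by simp
      then have "x * (1 - r ^ Suc m * x) \<le> x * 1" using x by (intro mult_left_mono) auto
      then show ?thesis using Q by (simp add: divide_right_mono)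
    qed
    then have "(1 + r) / r\<^sup>2 * (x * ((1 - r ^ Suc m * x) / qi r (Suc m))) \<le> (1 + r) / r\<^sup>2 * (x / qi r (Suc m))"
      using r by (intro mult_left_mono) auto
    then show ?thesis using pp by (intro divide_right_mono) auto
  qed
  also have "\<dots> \<le> (\<Sum>k. mm r (Suc m) k x * cs r (Suc m) 1 k) / p"
    using e1_lower_sum[OF pq r_def x] pp by (intro divide_right_mono) auto
  also have "\<dots> = mkz_durrmeyer p q (Suc m) (\<lambda>t. t) x"
    unfolding f using durr_conv(1)[OF pq r_def _ x, of "Suc m" 1] by simp
  finally show ?thesis .
qed

lemma e2_upper: assumes x: "0 \<le> x" "x < 1"
  shows "mkz_durrmeyer p q (Suc (Suc m)) (\<lambda>t. t\<^sup>2) x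
       \<le> x\<^sup>2 / q\<^sup>2 + (p + q)\<^sup>2 / q ^ 5 * ((p ^ Suc (Suc m) - q ^ Suc (Suc m) * x) / pq_int p q (Suc (Suc m))) * x
         + p * (p + q) / q ^ 6 * ((p ^ Suc (Suc m) - q ^ Suc (Suc m) * x) * (p ^ Suc m - q ^ Suc m * x))
             / (pq_int p q (Suc (Suc m)) * pq_int p q (Suc m))"
proof -
  define r where "r = q / p"
  have r: "0 < r" "r < 1" using r01[OF pq r_def] by auto
  have pp: "p > 0" using pq by simp
  have Q: "qi r (Suc m) > 0" "qi r (Suc (Suc m)) > 0" using qi_pos[OF r] by simp_all
  have M: "p ^ m > 0" using pp by simp
  have "mkz_durrmeyer p q (Suc (Suc m)) (\<lambda>t. t\<^sup>2) x = (\<Sum>k. mm r (Suc (Suc m)) k x * cs r (Suc (Suc m)) 2 k) / p\<^sup>2"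
    using durr_conv(1)[OF pq r_def _ x, of "Suc (Suc m)" 2] by simp
  also have "\<dots> \<le> ((1 + r) / r ^ 6 * ((1 - r ^ Suc m * x) * (1 - r ^ Suc (Suc m) * x) / (qi r (Suc (Suc m)) * qi r (Suc m)))
      + (r + 2 * r\<^sup>2 + r ^ 3) / r ^ 6 * (x * ((1 - r ^ Suc (Suc m) * x) / qi r (Suc (Suc m))))
      + 1 / r\<^sup>2 * (x * x)) / p\<^sup>2"
    using e2_upper_sum[OF pq r_def x] pp by (intro divide_right_mono) auto
  also have "\<dots> = x\<^sup>2 / (r * p)\<^sup>2 + (p + r * p)\<^sup>2 / (r * p) ^ 5 * ((p * p * p ^ m * (1 - r ^ Suc (Suc m) * x)) / (p * p ^ m * qi r (Suc (Suc m)))) * x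
      + p * (p + r * p) / (r * p) ^ 6 * ((p * p * p ^ m * (1 - r ^ Suc (Suc m) * x)) * (p * p ^ m * (1 - r ^ Suc m * x)))
        / ((p * p ^ m * qi r (Suc (Suc m))) * (p ^ m * qi r (Suc m)))"
    by (rule eq2[OF pp r(1) Q(1) Q(2) M])
  also have "\<dots> = x\<^sup>2 / q\<^sup>2 + (p + q)\<^sup>2 / q ^ 5 * ((p ^ Suc (Suc m) - q ^ Suc (Suc m) * x) / pq_int p q (Suc (Suc m))) * x
         + p * (p + q) / q ^ 6 * ((p ^ Suc (Suc m) - q ^ Suc (Suc m) * x) * (p ^ Suc m - q ^ Suc m * x))
             / (pq_int p q (Suc (Suc m)) * pq_int p q (Suc m))"
    unfolding pq_int_conv[OF pq r_def] unfolding q_eq[OF pq r_def] by (simp add: power_mult_distrib algebra_simps)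
  finally show ?thesis .
qed

end

theorem theorem1:
  fixes p q :: real and n :: nat
  assumes "0 < q" "q < p" "p \<le> 1" "n \<ge> 1"
  shows "\<forall>x\<in>{0..1}.
     mkz_durrmeyer p q n (\<lambda>t. 1) x = 1
   \<and> x / q\<^sup>2 * (1 - (q + 1) / pq_int p q n) \<le> mkz_durrmeyer p q n (\<lambda>t. t) x
   \<and> mkz_durrmeyer p q n (\<lambda>t. t) x
       \<le> x / q + (p ^ n - q ^ n * x) / (q\<^sup>2 * pq_int p q n)
   \<and> (n \<ge> 2 \<longrightarrow> mkz_durrmeyer p q n (\<lambda>t. t\<^sup>2) x
       \<le> x\<^sup>2 / q\<^sup>2 + (p + q)\<^sup>2 / q ^ 5 * ((p ^ n - q ^ n * x) / pq_int p q n) * x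
         + p * (p + q) / q ^ 6 * ((p ^ n - q ^ n * x) * (p ^ (n - 1) - q ^ (n - 1) * x))
             / (pq_int p q n * pq_int p q (n - 1)))"
proof
  fix x :: real assume "x \<in> {0..1}"
  then have x: "0 \<le> x" "x \<le> 1" by auto
  have pq: "0 < q" "q < p" and p1: "p \<le> 1" using assms by auto
  obtain m where n: "n = Suc m" using assms(4) by (cases n) auto
  have P: "pq_int p q n > 0" using pq_int_pos[OF pq p1] assms(4) by simp
  have q1: "q < 1" using pq p1 by simp
  have pqn: "q ^ k \<le> p ^ k" for k using pq by (intro power_mono) auto
  show "mkz_durrmeyer p q n (\<lambda>t. 1) x = 1
   \<and> x / q\<^sup>2 * (1 - (q + 1) / pq_int p q n) \<le> mkz_durrmeyer p q n (\<lambda>t. t) x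
   \<and> mkz_durrmeyer p q n (\<lambda>t. t) x
       \<le> x / q + (p ^ n - q ^ n * x) / (q\<^sup>2 * pq_int p q n)
   \<and> (n \<ge> 2 \<longrightarrow> mkz_durrmeyer p q n (\<lambda>t. t\<^sup>2) x
       \<le> x\<^sup>2 / q\<^sup>2 + (p + q)\<^sup>2 / q ^ 5 * ((p ^ n - q ^ n * x) / pq_int p q n) * x
         + p * (p + q) / q ^ 6 * ((p ^ n - q ^ n * x) * (p ^ (n - 1) - q ^ (n - 1) * x))
             / (pq_int p q n * pq_int p q (n - 1)))"
  proof (cases "x = 1")
    case True
    have iq: "1 \<le> 1 / q" "1 \<le> 1 / q\<^sup>2" using pq q1 by (simp_all add: power_le_one)
    have a: "1 / q\<^sup>2 * (1 - (q + 1) / pq_int p q n) \<le> 1"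
    proof -
      have "(1 - q) \<le> 1 / pq_int p q n" using gle[OF pq p1, of n] P by (simp add: le_divide_eq)
      then have "(q + 1) * (1 - q) \<le> (q + 1) * (1 / pq_int p q n)" using pq by (intro mult_left_mono) auto
      then have "1 - (q + 1) / pq_int p q n \<le> q\<^sup>2" by (simp add: algebra_simps power2_eq_square)
      then have "1 / q\<^sup>2 * (1 - (q + 1) / pq_int p q n) \<le> 1 / q\<^sup>2 * q\<^sup>2" using pq by (intro mult_left_mono) auto
      then show ?thesis using pq by simp
    qed
    have b: "1 \<le> 1 / q + (p ^ n - q ^ n) / (q\<^sup>2 * pq_int p q n)"
    proof -
      have "0 \<le> (p ^ n - q ^ n) / (q\<^sup>2 * pq_int p q n)" using pqn[of n] P pq by (intro divide_nonneg_pos) auto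
      then show ?thesis using iq by linarith
    qed
    have c: "n \<ge> 2 \<Longrightarrow> 1 \<le> 1 / q\<^sup>2 + (p + q)\<^sup>2 / q ^ 5 * ((p ^ n - q ^ n) / pq_int p q n) * 1
         + p * (p + q) / q ^ 6 * ((p ^ n - q ^ n) * (p ^ (n - 1) - q ^ (n - 1)))
             / (pq_int p q n * pq_int p q (n - 1))"
    proof -
      assume n2: "n \<ge> 2"
      have P': "pq_int p q (n - 1) > 0" using pq_int_pos[OF pq p1] n2 by simp
      have t1: "0 \<le> (p + q)\<^sup>2 / q ^ 5 * ((p ^ n - q ^ n) / pq_int p q n) * 1"
        using pqn[of n] P pq by (intro mult_nonneg_nonneg divide_nonneg_pos) auto
      have t2: "0 \<le> p * (p + q) / q ^ 6 * ((p ^ n - q ^ n) * (p ^ (n - 1) - q ^ (n - 1)))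
             / (pq_int p q n * pq_int p q (n - 1))"
        using pqn[of n] pqn[of "n - 1"] P P' pq
        by (intro divide_nonneg_pos mult_nonneg_nonneg mult_pos_pos) auto
      show ?thesis using iq t1 t2 by linarith
    qed
    show ?thesis unfolding mkz_durrmeyer_def True using a b c by simp
  next
    case False
    then have x1: "x < 1" using x by simp
    define r where "r = q / p"
    have r: "0 < r" "r < 1" using r01[OF pq r_def] by auto
    have f0: "(\<lambda>t::real. 1) = (\<lambda>t. t ^ 0)" by simp
    have e0: "mkz_durrmeyer p q n (\<lambda>t. 1) x = 1"
      unfolding f0 durr_conv(1)[OF pq r_def assms(4) x(1) x1] cs0[OF pq r_def]
      using mm_sums[OF r x(1) x1] by (simp add: sums_iff)
    have e2: "n \<ge> 2 \<longrightarrow> mkz_durrmeyer p q n (\<lambda>t. t\<^sup>2) x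
       \<le> x\<^sup>2 / q\<^sup>2 + (p + q)\<^sup>2 / q ^ 5 * ((p ^ n - q ^ n * x) / pq_int p q n) * x
         + p * (p + q) / q ^ 6 * ((p ^ n - q ^ n * x) * (p ^ (n - 1) - q ^ (n - 1) * x))
             / (pq_int p q n * pq_int p q (n - 1))"
    proof
      assume "n \<ge> 2"
      then obtain k where k: "n = Suc (Suc k)" by (cases n; cases "n - 1") auto
      show "mkz_durrmeyer p q n (\<lambda>t. t\<^sup>2) x
       \<le> x\<^sup>2 / q\<^sup>2 + (p + q)\<^sup>2 / q ^ 5 * ((p ^ n - q ^ n * x) / pq_int p q n) * x
         + p * (p + q) / q ^ 6 * ((p ^ n - q ^ n * x) * (p ^ (n - 1) - q ^ (n - 1) * x))
             / (pq_int p q n * pq_int p q (n - 1))"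
        unfolding k using e2_upper[OF pq p1 x(1) x1, of k] by simp
    qed
    show ?thesis using e0 e2 e1_lower[OF pq p1 x(1) x1, of m] e1_upper[OF pq p1 x(1) x1, of m]
      unfolding n by simp
  qed
qed

end
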